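(* Let $\mathcal D$ be universal, $\mathrm M=(M,d)\in\mathfrak U_{\mathcal D}$, $A\subseteq M$ finite and nonempty, and $\mathfrak s,\mathfrak t$ Katětov functions of $\mathrm M$ with $\operatorname{dom}(\mathfrak s)=\operatorname{dom}(\mathfrak t)=A$. Then $$d(\mathfrak s,\mathfrak t)=\Big\{m\in\mathcal D:\ \max_{x\in A}|\mathfrak s(x)-\mathfrak t(x)|\le m\le\min_{x\in A}\big(\mathfrak s(x)+\mathfrak t(x)\big)\Big\}.$$
   Context: $\mathcal D$ is a finite subset of $\mathbb R_{\ge0}$ containing $0$. $\mathfrak U_{\mathcal D}$ is the class of countable homogeneous metric spaces (every isometry between finite subspaces extends to an isometry of the space onto itself) with distance set exactly $\mathcal D$ into which every finite metric space with distances in $\mathcal D$ embeds isometrically; $\mathcal D$ is universal if this class is nonempty. A Katětov function of $\mathrm M$ is a map $\mathfrak t:F\to\mathcal D\setminus\{0\}$, $F\subseteq M$ finite, with $|\mathfrak t(x)-\mathfrak t(y)|\le d(x,y)\le\mathfrak t(x)+\mathfrak t(y)$ for all $x,y\in F$; $\operatorname{orb}(\mathfrak t)=\{y\in M\setminus F: d(y,x)=\mathfrak t(x)\ \forall x\in F\}$. For Katětov functions $\mathfrak s,\mathfrak t$: $d(\mathfrak s,\mathfrak t)=\{d(x,y): x\in\operatorname{orb}(\mathfrak s),\ y\in\operatorname{orb}(\mathfrak t)\}$. *)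

theory Defs
  imports "HOL-Analysis.Analysis"
begin

definition dist_set :: "'a set \<Rightarrow> ('a \<Rightarrow> 'a \<Rightarrow> real) \<Rightarrow> real set" where
  "dist_set M d = {d x y | x y. x \<in> M \<and> y \<in> M}"

definition isometry_betw :: "('a \<Rightarrow> 'a \<Rightarrow> real) \<Rightarrow> ('a \<Rightarrow> 'a) \<Rightarrow> 'a set \<Rightarrow> 'a set \<Rightarrow> bool" where
  "isometry_betw d f X Y \<longleftrightarrow> bij_betw f X Y \<and> (\<forall>x\<in>X. \<forall>y\<in>X. d (f x) (f y) = d x y)"

definition homogeneous :: "'a set \<Rightarrow> ('a \<Rightarrow> 'a \<Rightarrow> real) \<Rightarrow> bool" where
  "homogeneous M d \<longleftrightarrow>
     (\<forall>X Y f. X \<subseteq> M \<and> Y \<subseteq> M \<and> finite X \<and> finite Y \<and> isometry_betw d f X Y \<longrightarrow>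
        (\<exists>g. isometry_betw d g M M \<and> (\<forall>x\<in>X. g x = f x)))"

definition isometric_embedding ::
  "'b set \<Rightarrow> ('b \<Rightarrow> 'b \<Rightarrow> real) \<Rightarrow> 'a set \<Rightarrow> ('a \<Rightarrow> 'a \<Rightarrow> real) \<Rightarrow> ('b \<Rightarrow> 'a) \<Rightarrow> bool" where
  "isometric_embedding F e M d h \<longleftrightarrow> h ` F \<subseteq> M \<and> (\<forall>x\<in>F. \<forall>y\<in>F. d (h x) (h y) = e x y)"

text \<open>Every finite metric space with distances in D embeds isometrically into (M,d).
  Finite metric spaces are represented (up to isometry) on finite subsets of nat.\<close>
definition finitely_universal :: "real set \<Rightarrow> 'a set \<Rightarrow> ('a \<Rightarrow> 'a \<Rightarrow> real) \<Rightarrow> bool" where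
  "finitely_universal D M d \<longleftrightarrow>
     (\<forall>(F::nat set) e. finite F \<and> Metric_space F e \<and> dist_set F e \<subseteq> D \<longrightarrow>
        (\<exists>h. isometric_embedding F e M d h))"

definition in_U :: "real set \<Rightarrow> 'a set \<Rightarrow> ('a \<Rightarrow> 'a \<Rightarrow> real) \<Rightarrow> bool" where
  "in_U D M d \<longleftrightarrow> Metric_space M d \<and> countable M \<and> homogeneous M d \<and>
      dist_set M d = D \<and> finitely_universal D M d"

text \<open>D is universal: D is a finite subset of the nonnegative reals containing 0, and U_D is
  nonempty (witnesses are countable, so carriers in nat suffice).\<close>
definition universal_dist_set :: "real set \<Rightarrow> bool" where
  "universal_dist_set D \<longleftrightarrow> finite D \<and> 0 \<in> D \<and> (\<forall>r\<in>D. r \<ge> 0) \<and>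
      (\<exists>(M::nat set) d. in_U D M d)"

text \<open>Katetov function t with domain F (values outside F are irrelevant).\<close>
definition katetov :: "'a set \<Rightarrow> ('a \<Rightarrow> 'a \<Rightarrow> real) \<Rightarrow> real set \<Rightarrow> 'a set \<Rightarrow> ('a \<Rightarrow> real) \<Rightarrow> bool" where
  "katetov M d D F t \<longleftrightarrow> F \<subseteq> M \<and> finite F \<and> (\<forall>x\<in>F. t x \<in> D - {0}) \<and>
      (\<forall>x\<in>F. \<forall>y\<in>F. \<bar>t x - t y\<bar> \<le> d x y \<and> d x y \<le> t x + t y)"

definition orb :: "'a set \<Rightarrow> ('a \<Rightarrow> 'a \<Rightarrow> real) \<Rightarrow> 'a set \<Rightarrow> ('a \<Rightarrow> real) \<Rightarrow> 'a set" where
  "orb M d F t = {y \<in> M - F. \<forall>x\<in>F. d y x = t x}"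

definition kdist :: "'a set \<Rightarrow> ('a \<Rightarrow> 'a \<Rightarrow> real) \<Rightarrow> 'a set \<Rightarrow> ('a \<Rightarrow> real) \<Rightarrow> 'a set \<Rightarrow> ('a \<Rightarrow> real) \<Rightarrow> real set" where
  "kdist M d F s G t = {d x y | x y. x \<in> orb M d F s \<and> y \<in> orb M d G t}"

end

theory Submission
  imports Defs
begin

lemma embed_fin:
  fixes X :: "'b set" and E :: "'b \<Rightarrow> 'b \<Rightarrow> real"
  assumes fu: "finitely_universal D M d" and fin: "finite X" and ms: "Metric_space X E"
    and ds: "dist_set X E \<subseteq> D"
  shows "\<exists>h. h ` X \<subseteq> M \<and> (\<forall>x\<in>X. \<forall>y\<in>X. d (h x) (h y) = E x y)"
proof -
  obtain g where g: "bij_betw g {0..<card X} X" using ex_bij_betw_nat_finite[OF fin] by blast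
  define e where "e i j = E (g i) (g j)" for i j
  interpret X: Metric_space X E by (rule ms)
  have gX: "g i \<in> X" if "i \<in> {0..<card X}" for i using g that bij_betwE by blast
  have inj: "inj_on g {0..<card X}" using g bij_betw_def by blast
  have m2: "Metric_space {0..<card X} e"
  proof
    fix x y z
    show "0 \<le> e x y" unfolding e_def by simp
    show "e x y = e y x" unfolding e_def by (rule X.commute)
    show "e x y = 0 \<longleftrightarrow> x = y" if "x \<in> {0..<card X}" "y \<in> {0..<card X}"
      using that gX inj unfolding e_def by (metis X.zero inj_on_def)
    show "e x z \<le> e x y + e y z" if "x \<in> {0..<card X}" "y \<in> {0..<card X}" "z \<in> {0..<card X}"
      using that gX unfolding e_def by (simp add: X.triangle)
  qed
  have d2: "dist_set {0..<card X} e \<subseteq> D"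
    using ds gX unfolding dist_set_def e_def by blast
  obtain h where h: "isometric_embedding {0..<card X} e M d h"
    using fu m2 d2 unfolding finitely_universal_def by blast
  define h' where "h' = h \<circ> inv_into {0..<card X} g"
  have iv: "inv_into {0..<card X} g x \<in> {0..<card X}" "g (inv_into {0..<card X} g x) = x"
    if "x \<in> X" for x
    using g that by (metis bij_betw_def inv_into_into, metis bij_betw_def f_inv_into_f)
  show ?thesis
  proof (intro exI conjI ballI)
    show "h' ` X \<subseteq> M" using h iv unfolding isometric_embedding_def h'_def by auto
    fix x y assume "x \<in> X" "y \<in> X"
    then show "d (h' x) (h' y) = E x y"
      using h iv[of x] iv[of y] unfolding isometric_embedding_def h'_def e_def by auto
  qed
qed

definition EE :: "('a \<Rightarrow> 'a \<Rightarrow> real) \<Rightarrow> ('a \<Rightarrow> real) \<Rightarrow> ('a \<Rightarrow> real) \<Rightarrow> real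
   \<Rightarrow> 'a + bool \<Rightarrow> 'a + bool \<Rightarrow> real" where
  "EE d s t m u v = (case u of
     Inl a \<Rightarrow> (case v of Inl b \<Rightarrow> d a b | Inr c \<Rightarrow> (if c then \<bar>s a\<bar> else \<bar>t a\<bar>))
   | Inr b \<Rightarrow> (case v of Inl a \<Rightarrow> (if b then \<bar>s a\<bar> else \<bar>t a\<bar>) | Inr c \<Rightarrow> (if b = c then 0 else m)))"

lemma realize:
  assumes U: "in_U D M d" and AM: "A \<subseteq> M" and fin: "finite A"
    and ks: "katetov M d D A s" and kt: "katetov M d D A t"
    and mD: "m \<in> D" and mpos: "m > 0" and z0: "0 \<in> D"
    and bnd: "\<forall>a\<in>A. \<bar>s a - t a\<bar> \<le> m \<and> m \<le> s a + t a"
  shows "\<exists>x y. x \<in> orb M d A s \<and> y \<in> orb M d A t \<and> d x y = m"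
proof -
  have msM: "Metric_space M d" and hom: "homogeneous M d" and dsM: "dist_set M d = D"
    and fu: "finitely_universal D M d" using U unfolding in_U_def by auto
  interpret M: Metric_space M d by (rule msM)
  have spos: "s a > 0" "t a > 0" "s a \<in> D" "t a \<in> D" if "a \<in> A" for a
  proof -
    have "s a \<in> dist_set M d" "t a \<in> dist_set M d" using ks kt that dsM unfolding katetov_def by auto
    then have "s a \<ge> 0" "t a \<ge> 0" unfolding dist_set_def by auto
    then show "s a > 0" "t a > 0" "s a \<in> D" "t a \<in> D" using ks kt that unfolding katetov_def by auto
  qed
  have ksA: "\<bar>s a - s b\<bar> \<le> d a b \<and> d a b \<le> s a + s b" "\<bar>t a - t b\<bar> \<le> d a b \<and> d a b \<le> t a + t b"
    if "a \<in> A" "b \<in> A" for a b using ks kt that unfolding katetov_def by auto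
  define X where "X = Inl ` A \<union> Inr ` (UNIV :: bool set)"
  define E where "E = EE d s t m"
  have finX: "finite X" unfolding X_def using fin by simp
  have dA: "a \<in> M" if "a \<in> A" for a using AM that by auto
  have msX: "Metric_space X E"
  proof
    fix x y z
    show "0 \<le> E x y" unfolding E_def EE_def using mpos
      by (auto split: sum.splits)
    show "E x y = E y x" unfolding E_def EE_def
      by (auto split: sum.splits simp: M.commute)
    show "E x y = 0 \<longleftrightarrow> x = y" if "x \<in> X" "y \<in> X"
      using that unfolding X_def
    proof (elim UnE imageE)
      fix a b assume "x = Inl a" "y = Inl b" "a \<in> A" "b \<in> A"
      then show ?thesis unfolding E_def EE_def using dA by simp
    next
      fix a b assume "x = Inl a" "y = Inr b" "a \<in> A"
      then show ?thesis unfolding E_def EE_def using spos[of a] by simp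
    next
      fix a b assume "x = Inr a" "y = Inl b" "b \<in> A"
      then show ?thesis unfolding E_def EE_def using spos[of b] by simp
    next
      fix a b assume "x = Inr a" "y = Inr b"
      then show ?thesis unfolding E_def EE_def using mpos by simp
    qed
    show "E x z \<le> E x y + E y z" if "x \<in> X" "y \<in> X" "z \<in> X"
      using that unfolding X_def
    proof (elim UnE imageE)
      fix a b c assume "x = Inl a" "y = Inl b" "z = Inl c" "a \<in> A" "b \<in> A" "c \<in> A"
      then show ?thesis unfolding E_def EE_def using dA by (simp add: M.triangle)
    next
      fix a b c assume "x = Inl a" "y = Inl b" "z = Inr c" "a \<in> A" "b \<in> A"
      then show ?thesis unfolding E_def EE_def using ksA[of a b] spos[of a] spos[of b] by auto
    next
      fix a b c assume "x = Inl a" "y = Inr b" "z = Inl c" "a \<in> A" "c \<in> A"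
      then show ?thesis unfolding E_def EE_def using ksA[of a c] spos[of a] spos[of c] by auto
    next
      fix a b c assume "x = Inr a" "y = Inl b" "z = Inl c" "b \<in> A" "c \<in> A"
      then show ?thesis unfolding E_def EE_def using ksA[of b c] spos[of b] spos[of c] by auto
    next
      fix a b c assume "x = Inl a" "y = Inr b" "z = Inr c" "a \<in> A"
      then show ?thesis unfolding E_def EE_def using bnd spos[of a] by auto
    next
      fix a b c assume "x = Inr a" "y = Inr b" "z = Inl c" "c \<in> A"
      then show ?thesis unfolding E_def EE_def using bnd spos[of c] by auto
    next
      fix a b c assume "x = Inr a" "y = Inl b" "z = Inr c" "b \<in> A"
      then show ?thesis unfolding E_def EE_def using bnd spos[of b] by auto
    next
      fix a b c assume "x = Inr a" "y = Inr b" "z = Inr c"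
      then show ?thesis unfolding E_def EE_def using mpos by auto
    qed
  qed
  have dsX: "dist_set X E \<subseteq> D"
  proof
    fix r assume "r \<in> dist_set X E"
    then obtain x y where r: "r = E x y" "x \<in> X" "y \<in> X" unfolding dist_set_def by auto
    have dd: "d a b \<in> D" if "a \<in> A" "b \<in> A" for a b using dsM dA that unfolding dist_set_def by auto
    show "r \<in> D" using r(2,3) unfolding X_def
    proof (elim UnE imageE)
      fix a b assume "x = Inl a" "y = Inl b" "a \<in> A" "b \<in> A"
      then show ?thesis unfolding r(1) E_def EE_def using dd by simp
    next
      fix a b assume "x = Inl a" "y = Inr b" "a \<in> A"
      then show ?thesis unfolding r(1) E_def EE_def using spos[of a] by simp
    next
      fix a b assume "x = Inr a" "y = Inl b" "b \<in> A"
      then show ?thesis unfolding r(1) E_def EE_def using spos[of b] by simp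
    next
      fix a b assume "x = Inr a" "y = Inr b"
      then show ?thesis unfolding r(1) E_def EE_def using mD z0 by simp
    qed
  qed
  obtain h where h: "h ` X \<subseteq> M" "\<forall>x\<in>X. \<forall>y\<in>X. d (h x) (h y) = E x y"
    using embed_fin[OF fu finX msX dsX] by blast
  define \<phi> where "\<phi> a = h (Inl a)" for a
  have hX: "Inl a \<in> X" if "a \<in> A" for a using that unfolding X_def by auto
  have hT: "Inr b \<in> X" for b unfolding X_def by auto
  have phid: "d (\<phi> a) (\<phi> b) = d a b" if "a \<in> A" "b \<in> A" for a b
    using h(2) hX that unfolding \<phi>_def E_def EE_def by auto
  have injp: "inj_on \<phi> A"
  proof (rule inj_onI)
    fix a b assume "a \<in> A" "b \<in> A" "\<phi> a = \<phi> b"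
    moreover have "\<phi> b \<in> M" using h(1) hX[OF \<open>b \<in> A\<close>] unfolding \<phi>_def by auto
    ultimately have "d a b = 0" using phid[of a b] by simp
    then show "a = b" using \<open>a \<in> A\<close> \<open>b \<in> A\<close> dA by simp
  qed
  have isoP: "isometry_betw d \<phi> A (\<phi> ` A)"
    unfolding isometry_betw_def using injp phid by (simp add: bij_betw_imageI)
  have pM: "\<phi> ` A \<subseteq> M" using h(1) hX unfolding \<phi>_def by auto
  obtain g where g: "isometry_betw d g M M" "\<forall>x\<in>A. g x = \<phi> x"
    using hom[unfolded homogeneous_def, rule_format, OF conjI[OF AM conjI[OF pM conjI[OF fin conjI[OF finite_imageI[OF fin] isoP]]]]]
    by blast
  have gsurj: "g ` M = M" and giso: "\<forall>x\<in>M. \<forall>y\<in>M. d (g x) (g y) = d x y"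
    using g(1) unfolding isometry_betw_def bij_betw_def by blast+
  have pre: "\<exists>x\<in>M. g x = h (Inr b)" for b
  proof -
    have "h (Inr b) \<in> M" using h(1) hT by blast
    then have "h (Inr b) \<in> g ` M" using gsurj by simp
    then show ?thesis by (metis imageE)
  qed
  have orbit: "x \<in> orb M d A (\<lambda>a. if b then s a else t a)"
    if "x \<in> M" "g x = h (Inr b)" for x b
  proof -
    have dist: "d x a = (if b then s a else t a)" if "a \<in> A" for a
    proof -
      have "d x a = d (g x) (g a)" using giso \<open>x \<in> M\<close> dA[OF that] by metis
      also have "\<dots> = d (h (Inr b)) (h (Inl a))" using \<open>g x = h (Inr b)\<close> g(2) that \<phi>_def by simp
      also have "\<dots> = (if b then s a else t a)" using h(2)[rule_format, OF hT hX[OF that]] spos[OF that]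
        unfolding E_def EE_def by simp
      finally show ?thesis .
    qed
    have "x \<notin> A"
    proof
      assume "x \<in> A"
      then have "d x x = (if b then s x else t x)" by (rule dist)
      then show False using spos[OF \<open>x \<in> A\<close>] \<open>x \<in> M\<close> by (auto split: if_splits)
    qed
    then show ?thesis unfolding orb_def using dist \<open>x \<in> M\<close> by auto
  qed
  obtain x where x: "x \<in> M" "g x = h (Inr True)" using pre by blast
  obtain y where y: "y \<in> M" "g y = h (Inr False)" using pre by blast
  have "d (g x) (g y) = d x y" using giso x(1) y(1) by blast
  then have "d x y = d (h (Inr True)) (h (Inr False))" using x(2) y(2) by simp
  also have "\<dots> = m" using h(2)[rule_format, OF hT hT] unfolding E_def EE_def by simp
  finally show ?thesis using orbit[OF x] orbit[OF y] by auto
qed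

theorem lemma4p1:
  fixes D :: "real set" and M :: "'a set" and d :: "'a \<Rightarrow> 'a \<Rightarrow> real"
    and A :: "'a set" and s t :: "'a \<Rightarrow> real"
  assumes "universal_dist_set D"
    and "in_U D M d"
    and "A \<subseteq> M" and "finite A" and "A \<noteq> {}"
    and "katetov M d D A s" and "katetov M d D A t"
  shows "kdist M d A s A t =
    {m \<in> D. Max ((\<lambda>x. \<bar>s x - t x\<bar>) ` A) \<le> m \<and> m \<le> Min ((\<lambda>x. s x + t x) ` A)}"
proof -
  note U = assms(2)
  have msM: "Metric_space M d" and dsM: "dist_set M d = D" using U unfolding in_U_def by auto
  interpret M: Metric_space M d by (rule msM)
  have dA: "a \<in> M" if "a \<in> A" for a using assms(3) that by auto
  have finI: "finite ((\<lambda>x. \<bar>s x - t x\<bar>) ` A)" "finite ((\<lambda>x. s x + t x) ` A)"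
    "(\<lambda>x. \<bar>s x - t x\<bar>) ` A \<noteq> {}" "(\<lambda>x. s x + t x) ` A \<noteq> {}" using assms(4,5) by auto
  show ?thesis
  proof (rule set_eqI, rule iffI)
    fix z assume "z \<in> kdist M d A s A t"
    then obtain x y where z: "z = d x y" "x \<in> orb M d A s" "y \<in> orb M d A t"
      unfolding kdist_def by auto
    have xy: "x \<in> M" "y \<in> M" "\<forall>a\<in>A. d x a = s a" "\<forall>a\<in>A. d y a = t a"
      using z unfolding orb_def by auto
    have "z \<in> D" using z xy dsM unfolding dist_set_def by auto
    moreover have "\<bar>s a - t a\<bar> \<le> z" if "a \<in> A" for a
      using xy that dA[OF that] M.triangle[of x y a] M.triangle[of y x a] M.commute[of x y] z(1)
      by (metis abs_le_iff add.commute diff_le_eq minus_diff_eq)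
    moreover have "z \<le> s a + t a" if "a \<in> A" for a
      using xy that dA[OF that] M.triangle[of x a y] M.commute[of a y] z(1) by metis
    ultimately show "z \<in> {m \<in> D. Max ((\<lambda>x. \<bar>s x - t x\<bar>) ` A) \<le> m \<and> m \<le> Min ((\<lambda>x. s x + t x) ` A)}"
      using finI by (auto simp: Max_le_iff Min_ge_iff)
  next
    fix m assume "m \<in> {m \<in> D. Max ((\<lambda>x. \<bar>s x - t x\<bar>) ` A) \<le> m \<and> m \<le> Min ((\<lambda>x. s x + t x) ` A)}"
    then have mD: "m \<in> D" and bnd: "\<forall>a\<in>A. \<bar>s a - t a\<bar> \<le> m \<and> m \<le> s a + t a"
      using finI by (auto simp: Max_le_iff Min_ge_iff)
    obtain a0 where a0: "a0 \<in> A" using assms(5) by auto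
    have z0: "0 \<in> D" using assms(1) unfolding universal_dist_set_def by simp
    have spos: "s a > 0" "s a \<in> D" if "a \<in> A" for a
    proof -
      have "s a \<in> dist_set M d" using assms(6) that dsM unfolding katetov_def by auto
      then have "s a \<ge> 0" unfolding dist_set_def by auto
      then show "s a > 0" "s a \<in> D" using assms(6) that unfolding katetov_def by auto
    qed
    show "m \<in> kdist M d A s A t"
    proof (cases "m > 0")
      case True
      then obtain x y where "x \<in> orb M d A s" "y \<in> orb M d A t" "d x y = m"
        using realize[OF U assms(3,4,6,7) mD True z0 bnd] by blast
      then show ?thesis unfolding kdist_def by blast
    next
      case False
      then have m0: "m \<le> 0" by simp
      have st: "s a = t a" if "a \<in> A" for a using bnd that m0 by fastforce
      have "m \<ge> 0" using bnd a0 by (meson abs_ge_zero order_trans)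
      then have m00: "m = 0" using m0 by simp
      define q where "q = Min (s ` A)"
      have qin: "q \<in> s ` A" unfolding q_def using assms(4,5) by (intro Min_in) auto
      have qle: "q \<le> s a" if "a \<in> A" for a unfolding q_def using assms(4) that by simp
      have qD: "q \<in> D" "q > 0" using qin spos by auto
      have bq: "\<forall>a\<in>A. \<bar>s a - s a\<bar> \<le> q \<and> q \<le> s a + s a"
        using qle qD spos by fastforce
      obtain x y where x: "x \<in> orb M d A s"
        using realize[OF U assms(3,4,6,6) qD z0 bq] by blast
      have "x \<in> orb M d A t" using x st unfolding orb_def by auto
      moreover have "d x x = 0" using x unfolding orb_def by auto
      ultimately have "m = d x x \<and> x \<in> orb M d A s \<and> x \<in> orb M d A t" using x m00 by simp
      then show ?thesis unfolding kdist_def by blast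
    qed
  qed
qed

end
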